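(* Let $C=(1,c_2,c_3,c_4,c_5,c_6)$ be a system and $\ell=\lceil c_5/c_3\rceil$, and suppose $C$ satisfies (a), (b), or (c): (a) $C=(1,2,3,c_4,c_4+1,2c_4)$ and $c_4>4$; (b) $C=(1,c_2,2c_2-1,c_4,c_2+c_4-1,2c_4-1)$, $c_4\ge 3c_2-1$, $\mathrm{grd}_C(\ell c_3)\le\ell$, and $\mathrm{grd}_C(\ell c_3)=\ell c_3-c_5+1-\lfloor(\ell c_3-c_5)/c_2\rfloor(c_2-1)$; (c) $C=(1,c_2,2c_2,c_4,c_2+c_4,2c_4)$, $c_4\ge 3c_2-1$, $c_4\ne 3c_2$, $\mathrm{grd}_C(\ell c_3)\le\ell$, and $\mathrm{grd}_C(\ell c_3)=\ell c_3-c_5+1-\lfloor(\ell c_3-c_5)/c_2\rfloor(c_2-1)$. Then $C$ is canonical and the subsystem $(1,c_2,c_3,c_4,c_5)$ is noncanonical.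
   Context: A system is a tuple $C=(c_1,\dots,c_n)$ of integers with $1=c_1<c_2<\dots<c_n$; for $k\le n$, $(c_1,\dots,c_k)$ is a subsystem. For a positive integer $v$, $\mathrm{opt}_C(v)$ is the minimum of $\sum_i x_i$ over $x\in\mathbb{Z}_{\ge0}^n$ with $\sum_i c_ix_i=v$. The greedy representation of $v$ is produced by: for $i=n$ down to $1$, while $c_i\le$ remaining value, take a coin $c_i$. $\mathrm{grd}_C(v)$ is its number of coins. A positive integer $w$ is a counterexample if $\mathrm{opt}_C(w)<\mathrm{grd}_C(w)$; $C$ is canonical if it has none, noncanonical otherwise. *)

theory Defs
  imports Main
begin

definition is_system :: "nat list \<Rightarrow> bool" where
  "is_system C \<longleftrightarrow> C \<noteq> [] \<and> C ! 0 = 1 \<and> sorted_wrt (<) C"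

definition opt :: "nat list \<Rightarrow> nat \<Rightarrow> nat" where
  "opt C v = (LEAST k. \<exists>x::nat list. length x = length C \<and>
      (\<Sum>i<length C. C ! i * x ! i) = v \<and> (\<Sum>i<length C. x ! i) = k)"

text \<open>Greedy: process coins from largest to smallest; the while loop
  "while c <= remaining, take c" takes exactly (remaining div c) coins.\<close>
fun grd_desc :: "nat list \<Rightarrow> nat \<Rightarrow> nat" where
  "grd_desc [] v = 0"
| "grd_desc (c # cs) v = v div c + grd_desc cs (v mod c)"

definition grd :: "nat list \<Rightarrow> nat \<Rightarrow> nat" where
  "grd C v = grd_desc (rev C) v"

definition counterexample :: "nat list \<Rightarrow> nat \<Rightarrow> bool" where
  "counterexample C w \<longleftrightarrow> w > 0 \<and> opt C w < grd C w"

definition canonical :: "nat list \<Rightarrow> bool" where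
  "canonical C \<longleftrightarrow> (\<forall>w. \<not> counterexample C w)"

end

theory Submission
  imports Defs
begin

lemma grd_desc_0[simp]: "grd_desc cs 0 = 0"
  by (induction cs) auto

lemma rep_bound:
  assumes loc: "\<And>w c. c \<in> set C \<Longrightarrow> c \<le> w \<Longrightarrow> grd C w \<le> Suc (grd C (w - c))"
  shows "length x = length C \<Longrightarrow> (\<Sum>i<length C. C ! i * x ! i) = v
         \<Longrightarrow> (\<Sum>i<length C. x ! i) = k \<Longrightarrow> grd C v \<le> k"
proof (induction k arbitrary: x v)
  case 0
  then have "\<forall>i<length C. x ! i = 0" by simp
  then have "v = 0" using 0 by simp
  then show ?case by (simp add: grd_def)
next
  case (Suc k)
  have "\<exists>i<length C. x ! i > 0"
  proof (rule ccontr)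
    assume "\<not> (\<exists>i<length C. x ! i > 0)"
    then have "(\<Sum>i<length C. x ! i) = 0" by simp
    with Suc.prems show False by simp
  qed
  then obtain i where i: "i < length C" "x ! i > 0" by blast
  define x' where "x' = x[i := x ! i - 1]"
  have len: "length x' = length C" using Suc.prems by (simp add: x'_def)
  have fin: "finite {..<length C}" by simp
  have iin: "i \<in> {..<length C}" using i by simp
  have s1: "(\<Sum>j<length C. x ! j) = x ! i + (\<Sum>j\<in>{..<length C} - {i}. x ! j)"
    using sum.remove[OF fin iin] by simp
  have s1': "(\<Sum>j<length C. x' ! j) = x' ! i + (\<Sum>j\<in>{..<length C} - {i}. x' ! j)"
    using sum.remove[OF fin iin] by simp
  have eqo: "(\<Sum>j\<in>{..<length C} - {i}. x' ! j) = (\<Sum>j\<in>{..<length C} - {i}. x ! j)"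
    by (rule sum.cong) (auto simp: x'_def)
  have s2: "(\<Sum>j<length C. C ! j * x ! j) = C ! i * x ! i + (\<Sum>j\<in>{..<length C} - {i}. C ! j * x ! j)"
    using sum.remove[OF fin iin] by simp
  have s2': "(\<Sum>j<length C. C ! j * x' ! j) = C ! i * x' ! i + (\<Sum>j\<in>{..<length C} - {i}. C ! j * x' ! j)"
    using sum.remove[OF fin iin] by simp
  have eqo2: "(\<Sum>j\<in>{..<length C} - {i}. C ! j * x' ! j) = (\<Sum>j\<in>{..<length C} - {i}. C ! j * x ! j)"
    by (rule sum.cong) (auto simp: x'_def)
  have xi': "x' ! i = x ! i - 1" using i Suc.prems by (simp add: x'_def)
  have k': "(\<Sum>j<length C. x' ! j) = k" using s1 s1' eqo xi' Suc.prems i by simp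
  have mul: "C ! i * x ! i = C ! i * (x ! i - 1) + C ! i" using i
    by (metis Suc_diff_1 add.commute mult_Suc_right)
  have v': "(\<Sum>j<length C. C ! j * x' ! j) = v - C ! i" "C ! i \<le> v"
    using s2 s2' eqo2 xi' Suc.prems mul by auto
  have "grd C (v - C ! i) \<le> k" using Suc.IH[OF len v'(1) k'] .
  moreover have "grd C v \<le> Suc (grd C (v - C ! i))"
    using loc[of "C ! i" v] i v'(2) by simp
  ultimately show ?case by simp
qed

lemma canonicalI:
  assumes C0: "C \<noteq> []" "C ! 0 = 1"
  assumes loc: "\<And>w c. c \<in> set C \<Longrightarrow> c \<le> w \<Longrightarrow> grd C w \<le> Suc (grd C (w - c))"
  shows "canonical C"
  unfolding canonical_def counterexample_def
proof (intro allI notI)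
  fix w assume "0 < w \<and> opt C w < grd C w"
  define P where "P = (\<lambda>k. \<exists>x::nat list. length x = length C \<and>
      (\<Sum>i<length C. C ! i * x ! i) = w \<and> (\<Sum>i<length C. x ! i) = k)"
  define x0 where "x0 = w # replicate (length C - 1) (0::nat)"
  have lx0: "length x0 = length C" using C0 by (simp add: x0_def)
  have fin: "finite {..<length C}" by simp
  have iin: "0 \<in> {..<length C}" using C0 by simp
  have x0z: "\<And>j. j < length C \<Longrightarrow> j \<noteq> 0 \<Longrightarrow> x0 ! j = 0"
    subgoal for j by (cases j) (auto simp: x0_def) done
  have z1: "(\<Sum>j\<in>{..<length C} - {0}. C ! j * x0 ! j) = 0"
    by (rule sum.neutral) (auto simp: x0z)
  have z2: "(\<Sum>j\<in>{..<length C} - {0}. x0 ! j) = 0"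
    by (rule sum.neutral) (auto simp: x0z)
  have "P w" unfolding P_def
    apply (rule exI[of _ x0])
    using sum.remove[OF fin iin, of "\<lambda>j. C ! j * x0 ! j"] sum.remove[OF fin iin, of "\<lambda>j. x0 ! j"] z1 z2 lx0 C0
    by (simp add: x0_def)
  then have "P (opt C w)" unfolding opt_def P_def[symmetric] by (rule LeastI)
  then obtain x where "length x = length C" "(\<Sum>i<length C. C ! i * x ! i) = w"
      "(\<Sum>i<length C. x ! i) = opt C w" unfolding P_def by blast
  then have "grd C w \<le> opt C w" using rep_bound[OF loc] by blast
  with \<open>0 < w \<and> opt C w < grd C w\<close> show False by simp
qed

definition gg :: "nat \<Rightarrow> nat \<Rightarrow> nat \<Rightarrow> nat" where
  "gg a c3 x = x div c3 + (x mod c3) div a + (x mod c3) mod a"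

lemma gg_eval:
  assumes "2 \<le> a" "a < c3" "c3 \<le> 2*a" "s < c3"
  shows "gg a c3 (c3*q + s) = q + (if s < a then s else Suc (s - a))"
proof -
  have d: "(c3*q + s) div c3 = q" "(c3*q + s) mod c3 = s" using assms by auto
  show ?thesis
  proof (cases "s < a")
    case True then show ?thesis unfolding gg_def d by simp
  next
    case False
    have s1: "s - a < a" using assms by simp
    have "s div a = Suc ((s - a) div a)" using False assms le_div_geq[of a s] by simp
    then have "s div a = 1" using s1 by simp
    moreover have "s mod a = s - a" using False le_mod_geq[of a s] s1 by simp
    ultimately show ?thesis unfolding gg_def d using False by simp
  qed
qed

lemma gg_dec:
  fixes x c3 :: nat
  assumes "0 < c3"
  obtains q s where "x = c3*q + s" "s < c3"
proof -
  have "x = c3 * (x div c3) + x mod c3" by simp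
  moreover have "x mod c3 < c3" using assms by simp
  ultimately show ?thesis using that by blast
qed

lemma gg_id: assumes "2 \<le> a" "a < c3" "c3 \<le> 2*a" "x < a" shows "gg a c3 x = x"
  using gg_eval[OF assms(1-3), of x 0] assms by simp

lemma gg_mid: assumes "2 \<le> a" "a < c3" "c3 \<le> 2*a" "a \<le> x" "x < c3" shows "gg a c3 x = Suc (x - a)"
  using gg_eval[OF assms(1-3), of x 0] assms by simp

lemma gg_0[simp]: "gg a c3 0 = 0" by (simp add: gg_def)

lemma gg_loc:
  assumes A: "2 \<le> a" "a < c3" "c3 \<le> 2*a" "2*a \<le> c3 + 1"
  and c: "c = 1 \<or> c = a \<or> c = c3" and cx: "c \<le> x"
  shows "gg a c3 x \<le> Suc (gg a c3 (x - c))"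
proof -
  obtain q s where x: "x = c3*q + s" "s < c3" using gg_dec[of c3 x] A by auto
  note ev = gg_eval[OF A(1-3)]
  have gx: "gg a c3 x = q + (if s < a then s else Suc (s - a))" using ev x by simp
  show ?thesis
  proof (cases "c \<le> s")
    case True
    then have "x - c = c3*q + (s - c)" using x by simp
    then have gxc: "gg a c3 (x - c) = q + (if s - c < a then s - c else Suc (s - c - a))"
      using ev[of "s - c" q] x by simp
    have s2: "s < 2*a" using x(2) A by linarith
    show ?thesis
    proof (cases "s < a")
      case True
      then show ?thesis unfolding gx gxc using \<open>c \<le> s\<close> c A by auto
    next
      case False
      show ?thesis unfolding gx gxc using False \<open>c \<le> s\<close> c s2 x(2) A
        by (elim disjE) (simp_all split: if_split, arith)
    qed
  next
    case False
    have "q \<noteq> 0"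
    proof
      assume "q = 0" then have "x = s" using x by simp
      then show False using False cx by simp
    qed
    then obtain q' where q: "q = Suc q'" using not0_implies_Suc by blast
    have cc3: "c \<le> c3" using c A by auto
    have xx: "x = c3*q' + c3 + s" using x q by simp
    have "x - c = c3*q' + (c3 + s - c)" using xx cc3 by simp
    moreover have "c3 + s - c < c3" using False A by arith
    ultimately have gxc: "gg a c3 (x - c) = q' + (if c3 + s - c < a then c3 + s - c else Suc (c3 + s - c - a))"
      using ev[of "c3 + s - c" q'] by simp
    show ?thesis unfolding gx gxc q using c False A x(2)
      by (elim disjE) (simp_all split: if_split, arith)
  qed
qed

lemma gg_mono:
  assumes A: "2 \<le> a" "a < c3" "c3 \<le> 2*a" "2*a \<le> c3 + 1"
  shows "gg a c3 x \<le> gg a c3 (x + (c3 - a))"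
proof -
  obtain q s where x: "x = c3*q + s" "s < c3" using gg_dec[of c3 x] A by auto
  note ev = gg_eval[OF A(1-3)]
  have gx: "gg a c3 x = q + (if s < a then s else Suc (s - a))" using ev x by simp
  show ?thesis
  proof (cases "s < a")
    case True
    then have "x + (c3 - a) = c3*q + (s + c3 - a)" "s + c3 - a < c3" using x A by auto
    then have "gg a c3 (x + (c3 - a)) = q + (if s + c3 - a < a then s + c3 - a else Suc (s + c3 - a - a))"
      using ev by simp
    then show ?thesis using gx True A by auto
  next
    case False
    then have "x + (c3 - a) = c3*Suc q + (s - a)" "s - a < c3" using x A by auto
    then have "gg a c3 (x + (c3 - a)) = Suc q + (if s - a < a then s - a else Suc (s - a - a))"
      using ev by presburger
    then show ?thesis using gx False A x by auto
  qed
qed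

lemma gg_ge2:
  assumes A: "2 \<le> a" "a < c3" "c3 \<le> 2*a" and "a < x" "x \<noteq> c3"
  shows "2 \<le> gg a c3 x"
proof -
  obtain q s where x: "x = c3*q + s" "s < c3" using gg_dec[of c3 x] A by auto
  have gx: "gg a c3 x = q + (if s < a then s else Suc (s - a))" using gg_eval[OF A] x by simp
  show ?thesis
  proof (cases q)
    case 0 then show ?thesis using gx x assms by auto
  next
    case (Suc q')
    show ?thesis
    proof (cases "q' = 0 \<and> s = 0")
      case True then show ?thesis using x Suc assms by simp
    next
      case False then show ?thesis using gx Suc by auto
    qed
  qed
qed

lemma gg_lo:
  assumes "2 \<le> a" "a < c3" "c3 \<le> 2*a" "X = c3*q + s" "s < a"
  shows "gg a c3 X = q + s"
  using gg_eval[of a c3 s q] assms by simp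

lemma gg_hi:
  assumes "2 \<le> a" "a < c3" "c3 \<le> 2*a" "X = c3*q + s" "a \<le> s" "s < c3"
  shows "gg a c3 X = q + Suc (s - a)"
  using gg_eval[of a c3 s q] assms by simp

locale kctx =
  fixes a c3 b d m :: nat
  assumes a2: "2 \<le> a" and ac3: "a < c3" and c3a: "c3 \<le> 2*a" and c3a': "2*a \<le> c3 + 1"
  and dc3: "d < c3" and hb: "b + d = c3*m + c3 + a"
  and h1: "d < a \<Longrightarrow> d \<le> Suc m" and h2: "a \<le> d \<Longrightarrow> d \<le> m + a"
  and b2a: "2*a \<le> b"
begin

lemmas glo = gg_lo[OF a2 ac3 c3a] and ghi = gg_hi[OF a2 ac3 c3a]
lemmas A = a2 ac3 c3a c3a' dc3 hb b2a

lemma K1: assumes t: "t < a" shows "t \<le> gg a c3 (b - a + t)"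
proof -
  consider "c3 - d + t < a" | "a \<le> c3 - d + t \<and> c3 - d + t < c3" | "c3 \<le> c3 - d + t" by linarith
  then show ?thesis
  proof cases
    case 1
    have "gg a c3 (b - a + t) = m + (c3 - d + t)" by (rule glo) (use A 1 in arith)+
    then show ?thesis using dc3 by simp
  next
    case 2
    have "gg a c3 (b - a + t) = m + Suc (c3 - d + t - a)" by (rule ghi) (use A 2 in arith)+
    then show ?thesis using 2 h1 h2 A by arith
  next
    case 3
    have "gg a c3 (b - a + t) = Suc m + (t - d)" by (rule glo) (use A 3 t in \<open>simp add: algebra_simps; arith\<close>)+
    then show ?thesis using 3 h1 t A by arith
  qed
qed

lemma K2: assumes t: "t < c3 - a" shows "t \<le> gg a c3 (b - c3 + t)"
proof (cases "d \<le> a + t")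
  case True
  show ?thesis
  proof (cases "a + t - d < a")
    case 1: True
    have "gg a c3 (b - c3 + t) = m + (a + t - d)" by (rule glo) (use A True 1 t in arith)+
    then show ?thesis using h1 h2 True by arith
  next
    case 2: False
    have "gg a c3 (b - c3 + t) = m + Suc (a + t - d - a)" by (rule ghi) (use A True 2 t in arith)+
    then show ?thesis using h1 h2 True 2 t A by arith
  qed
next
  case False
  then obtain m' where m: "m = Suc m'" using h2 by (cases m) auto
  have "gg a c3 (b - c3 + t) = m' + Suc (c3 + a + t - d - a)"
    by (rule ghi) (use A False t m in \<open>simp add: algebra_simps; arith\<close>)+
  then show ?thesis using A False by arith
qed

lemma K3: assumes r: "r < a" shows "r \<le> Suc (gg a c3 (b - 2*a + r))"
proof (cases "d \<le> c3 - a + r")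
  case True
  show ?thesis
  proof (cases "c3 - a + r - d < a")
    case 1: True
    have "gg a c3 (b - 2*a + r) = m + (c3 - a + r - d)" by (rule glo) (use A True 1 r in arith)+
    then show ?thesis using h1 h2 True A by arith
  next
    case 2: False
    have "gg a c3 (b - 2*a + r) = m + Suc (c3 - a + r - d - a)" by (rule ghi) (use A True 2 r in arith)+
    then show ?thesis using h1 h2 True 2 r A by arith
  qed
next
  case False
  have "m \<noteq> 0"
  proof
    assume "m = 0"
    then have "b - 2*a + r + d = c3 - a + r" using A by arith
    then show False using False A by arith
  qed
  then obtain m' where m: "m = Suc m'" by (cases m) auto
  have "gg a c3 (b - 2*a + r) = m' + Suc (2*c3 - a + r - d - a)"
    by (rule ghi) (use A False r m in \<open>simp add: algebra_simps; arith\<close>)+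
  moreover have ad: "a \<le> d" using False c3a' by arith
  moreover have "d \<le> m + a" using h2 ad by simp
  ultimately show ?thesis using m c3a' dc3 ac3 by linarith
qed

lemma K4: assumes r: "r < a" and big: "a + c3 \<le> b + r" shows "r \<le> Suc (gg a c3 (b + r - (a + c3)))"
proof (cases "d \<le> r")
  case True
  have "gg a c3 (b + r - (a + c3)) = m + (r - d)"
  proof (rule glo)
    show "b + r - (a + c3) = c3 * m + (r - d)" using hb True big by linarith
    show "r - d < a" using r by linarith
  qed
  then show ?thesis using h1 True r by linarith
next
  case False
  have "m \<noteq> 0"
  proof
    assume "m = 0"
    then have "b + r - (a + c3) + d = r" using hb big by simp
    then show False using False big by linarith
  qed
  then obtain m' where m: "m = Suc m'" by (cases m) auto
  have hb': "b + d = c3*m' + c3 + c3 + a" using hb m by simp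
  show ?thesis
  proof (cases "c3 + r - d < a")
    case True
    have "gg a c3 (b + r - (a + c3)) = m' + (c3 + r - d)"
    proof (rule glo)
      show "b + r - (a + c3) = c3 * m' + (c3 + r - d)" using hb' False big dc3 by linarith
      show "c3 + r - d < a" using True .
    qed
    then show ?thesis using dc3 m by linarith
  next
    case 2: False
    have "gg a c3 (b + r - (a + c3)) = m' + Suc (c3 + r - d - a)"
    proof (rule ghi)
      show "b + r - (a + c3) = c3 * m' + (c3 + r - d)" using hb' False big dc3 by linarith
      show "a \<le> c3 + r - d" using 2 by linarith
      show "c3 + r - d < c3" using False dc3 by linarith
    qed
    moreover have "d + a \<le> 1 + m + c3"
    proof (cases "d < a")
      case True then show ?thesis using c3a' by linarith
    next
      case False then show ?thesis using h2 c3a' by linarith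
    qed
    ultimately show ?thesis using m dc3 2 by linarith
  qed
qed

end

locale regs =
  fixes g :: "nat \<Rightarrow> nat" and a c3 b e f :: nat
  assumes a2: "2 \<le> a" and ac3: "a < c3" and c3a: "c3 \<le> 2*a" and c3a': "2*a \<le> c3 + 1"
  and cb: "c3 < b" and e_def: "e = c3 - a" and f1: "f \<le> 1" and bbig: "2*c3 + f \<le> a + b + 1"
  and g0: "g 0 = 0" and gid: "\<And>x. x < a \<Longrightarrow> g x = x"
  and gloc: "\<And>c x. c = 1 \<or> c = a \<or> c = c3 \<Longrightarrow> c \<le> x \<Longrightarrow> g x \<le> Suc (g (x - c))"
  and gmid: "\<And>x. a \<le> x \<Longrightarrow> x < c3 \<Longrightarrow> g x = Suc (x - a)"
  and gmono: "\<And>x. g x \<le> g (x + e)"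
  and fe: "f + e = 1 \<or> f + e = a"
  and f2e: "f + 2*e = a \<or> f + 2*e = c3"
  and Gmid: "\<And>r. f + e \<le> r \<Longrightarrow> r < f + 2*e \<Longrightarrow> g r \<le> Suc (r - (f+e))"
  and K1: "\<And>t. t < a \<Longrightarrow> t \<le> g (b - a + t)"
  and K2: "\<And>t. t < e \<Longrightarrow> t \<le> g (b - c3 + t)"
  and K3: "\<And>r. r < a \<Longrightarrow> r \<le> Suc (g (b - f - c3 + r))"
  and K4: "\<And>r. r < a \<Longrightarrow> b + e \<le> r + (2*b - f) - c3 \<Longrightarrow> r \<le> Suc (g (r + (2*b - f) - c3 - (b+e)))"
  and K5: "\<And>t. t < e \<Longrightarrow> b + e \<le> a + t + (2*b - f) - c3 \<Longrightarrow> t \<le> g (a + t + (2*b - f) - c3 - (b+e))"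
  and K6: "\<And>r. r < f + e \<Longrightarrow> r \<le> g (r + (2*b - f) - (b+e))"
  and K7: "\<And>t. t < e \<Longrightarrow> t \<le> g (b + t + (2*b - f) - 2*(b+e))"
begin

definition H :: "nat \<Rightarrow> nat" where
  "H r = (if b + e \<le> r then Suc (g (r - (b+e))) else if b \<le> r then Suc (r - b) else g r)"

lemma facts: "1 \<le> e" "e \<le> a" "c3 + f \<le> b" "f + 2*e \<le> b" "a \<le> b" "c3 < b" "e + f < b"
  using a2 ac3 c3a c3a' e_def f1 bbig cb by auto

lemma H_lo: "r < b \<Longrightarrow> H r = g r" by (simp add: H_def)
lemma H_mid: "b \<le> r \<Longrightarrow> r < b + e \<Longrightarrow> H r = Suc (r - b)" by (simp add: H_def)
lemma H_hi: "b + e \<le> r \<Longrightarrow> H r = Suc (g (r - (b+e)))" by (simp add: H_def)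

lemma A1: assumes "1 \<le> r" shows "H r \<le> Suc (H (r - 1))"
proof -
  consider "r < b" | "r = b" | "b < r \<and> r < b + e" | "r = b + e" | "b + e < r" by arith
  then show ?thesis
  proof cases
    case 1 then show ?thesis using H_lo gloc[of 1 r] assms by simp
  next
    case 2 then show ?thesis using H_mid facts by simp
  next
    case 3
    have "H (r - 1) = Suc (r - 1 - b)" using 3 by (intro H_mid) arith+
    then show ?thesis using H_mid[of r] 3 by simp
  next
    case 4 then show ?thesis using H_hi[of r] g0 by simp
  next
    case 5
    then have "H (r - 1) = Suc (g (r - 1 - (b+e)))" using H_hi by simp
    moreover have "r - 1 - (b+e) = r - (b+e) - 1" by simp
    ultimately show ?thesis using H_hi[of r] 5 gloc[of 1 "r - (b+e)"] by simp
  qed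
qed

lemma Aa: assumes "a \<le> r" shows "H r \<le> Suc (H (r - a))"
proof -
  note F = facts
  consider "r < b" | "b \<le> r \<and> r < b + e" | "b + e + a \<le> r" | "b + e \<le> r \<and> r < b + e + a" by arith
  then show ?thesis
  proof cases
    case 1 then show ?thesis using H_lo[of r] H_lo[of "r - a"] gloc[of a r] assms by simp
  next
    case 2
    then have "r - a < b" using F by arith
    then have h: "H (r - a) = g (r - a)" using H_lo by simp
    have "b - a + (r - b) = r - a" using 2 F by arith
    moreover have "r - b < a" using 2 F by arith
    ultimately have "r - b \<le> g (r - a)" using K1[of "r - b"] by simp
    then show ?thesis using h H_mid[of r] 2 by simp
  next
    case 3
    then have "H (r - a) = Suc (g (r - a - (b+e)))" using H_hi by simp
    moreover have "r - a - (b+e) = r - (b+e) - a" by simp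
    ultimately show ?thesis using H_hi[of r] 3 gloc[of a "r - (b+e)"] by simp
  next
    case 4
    then have u: "r - (b+e) < a" by arith
    then have gu: "g (r - (b+e)) = r - (b+e)" using gid by simp
    show ?thesis
    proof (cases "b \<le> r - a")
      case True
      then have "H (r - a) = Suc (r - a - b)" using 4 F by (intro H_mid) arith+
      then show ?thesis using H_hi[of r] 4 gu c3a' e_def True by (simp, arith)
    next
      case False
      then have "r - (b+e) = 0" using 4 e_def c3a' by arith
      then show ?thesis using H_hi[of r] 4 g0 by simp
    qed
  qed
qed

lemma Ac3: assumes "c3 \<le> r" shows "H r \<le> Suc (H (r - c3))"
proof -
  note F = facts
  consider "r < b" | "b \<le> r \<and> r < b + e" | "b + e + c3 \<le> r" | "b + e \<le> r \<and> r < b + e + c3 \<and> b \<le> r - c3"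
     | "b + e \<le> r \<and> r - c3 < b" by arith
  then show ?thesis
  proof cases
    case 1 then show ?thesis using H_lo[of r] H_lo[of "r - c3"] gloc[of c3 r] assms by simp
  next
    case 2
    then have "r - c3 < b" using F e_def ac3 by arith
    then have h: "H (r - c3) = g (r - c3)" using H_lo by simp
    have "b - c3 + (r - b) = r - c3" using 2 F by arith
    moreover have "r - b < e" using 2 by arith
    ultimately have "r - b \<le> g (r - c3)" using K2[of "r - b"] by simp
    then show ?thesis using h H_mid[of r] 2 by simp
  next
    case 3
    then have "H (r - c3) = Suc (g (r - c3 - (b+e)))" using H_hi by simp
    moreover have "r - c3 - (b+e) = r - (b+e) - c3" by simp
    ultimately show ?thesis using H_hi[of r] 3 gloc[of c3 "r - (b+e)"] by simp
  next
    case 4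
    then have "r - c3 < b + e" using F by arith
    then have h: "H (r - c3) = Suc (r - c3 - b)" using H_mid 4 by simp
    have u1: "a \<le> r - (b+e)" using 4 e_def ac3 assms by arith
    have u2: "r - (b+e) < c3" using 4 e_def ac3 assms by arith
    have "g (r - (b+e)) = Suc (r - (b+e) - a)" using gmid[OF u1 u2] .
    moreover have "r - (b+e) - a = r - c3 - b" using 4 e_def ac3 assms by arith
    ultimately show ?thesis using h H_hi[of r] 4 by simp
  next
    case 5
    then have h: "H (r - c3) = g (r - c3)" using H_lo by simp
    have u: "r - (b+e) < a" using 5 e_def ac3 by arith
    then have gu: "g (r - (b+e)) = r - (b+e)" using gid by simp
    have "b - a + (r - (b+e)) = r - c3" using 5 e_def ac3 F by arith
    then have "r - (b+e) \<le> g (r - c3)" using K1[OF u] by simp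
    then show ?thesis using h gu H_hi[of r] 5 by simp
  qed
qed

lemma Ab: assumes "b \<le> r" "r < 2*b - f" shows "H r \<le> Suc (H (r - b))"
proof -
  note F = facts
  show ?thesis
  proof (cases "r < b + e")
    case True
    then have "r - b < a" using F by arith
    then show ?thesis using H_mid[of r] H_lo[of "r - b"] gid[of "r - b"] True assms F by simp
  next
    case False
    then have "r - b < b" using assms F by arith
    then have h: "H (r - b) = g (r - b)" using H_lo by simp
    have "r - b = r - (b+e) + e" using False by simp
    then show ?thesis using h H_hi[of r] False gmono[of "r - (b+e)"] by simp
  qed
qed

lemma Abe: assumes "b + e \<le> r" "r < 2*b - f" shows "H r \<le> Suc (H (r - (b+e)))"
proof -
  have "r - (b+e) < b" using assms facts by arith
  then show ?thesis using H_hi[OF assms(1)] H_lo by simp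
qed

lemma B1: assumes "r < 1" shows "H r \<le> H (r + (2*b - f) - 1)"
  using assms H_lo[of 0] g0 facts by simp

lemma Ba: assumes "r < a" shows "H r \<le> H (r + (2*b - f) - a)"
proof -
  note F = facts
  have h: "H r = r" using H_lo[of r] gid[OF assms] assms F by simp
  have "b + e \<le> r + (2*b - f) - a" using F e_def f1 by arith
  then have h2: "H (r + (2*b - f) - a) = Suc (g (r + (2*b - f) - a - (b+e)))" using H_hi by simp
  have "r + (2*b - f) - a - (b+e) = b - f - c3 + r" using F e_def f1 ac3 by arith
  then show ?thesis using h h2 K3[OF assms] by simp
qed

lemma Bc3: assumes "r < c3" shows "H r \<le> H (r + (2*b - f) - c3)"
proof -
  note F = facts
  have X: "b \<le> r + (2*b - f) - c3" using F f1 by arith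
  show ?thesis
  proof (cases "r < a")
    case True
    have h: "H r = r" using H_lo[of r] gid[OF True] True F by simp
    show ?thesis
    proof (cases "b + e \<le> r + (2*b - f) - c3")
      case True
      then show ?thesis using h H_hi K4[OF \<open>r < a\<close> True] by simp
    next
      case False
      then have "H (r + (2*b - f) - c3) = Suc (r + (2*b - f) - c3 - b)" using H_mid X by simp
      then show ?thesis using h F f1 by simp
    qed
  next
    case False
    have h: "H r = Suc (r - a)" using H_lo[of r] gmid[of r] False assms F by simp
    have t: "r - a < e" using False assms e_def by arith
    have ra: "a + (r - a) = r" using False by simp
    show ?thesis
    proof (cases "b + e \<le> r + (2*b - f) - c3")
      case True
      then show ?thesis using h H_hi K5[OF t] ra by simp
    next
      case False
      then have "H (r + (2*b - f) - c3) = Suc (r + (2*b - f) - c3 - b)" using H_mid X by simp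
      then show ?thesis using h F f1 by simp
    qed
  qed
qed

lemma Bb: assumes "r < b" shows "H r \<le> H (r + (2*b - f) - b)"
proof -
  note F = facts
  have h: "H r = g r" using H_lo assms by simp
  have X: "r + (2*b - f) - b = r + b - f" using F by arith
  consider "r < f" | "f \<le> r \<and> r < f + e" | "f + e \<le> r" by arith
  then show ?thesis
  proof cases
    case 1 then have "r = 0" using f1 by simp
    then show ?thesis using h g0 by simp
  next
    case 2
    then have "r < a" using fe a2 by auto
    then have "g r = r" using gid by simp
    moreover have "H (r + b - f) = Suc (r + b - f - b)" using 2 by (intro H_mid) arith+
    moreover note X
    ultimately show ?thesis using h 2 f1 by simp
  next
    case 3
    have "H (r + (2*b - f) - b) = Suc (g (r + b - f - (b+e)))" using H_hi X 3 by simp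
    moreover have "r + b - f - (b+e) = r - (f+e)" by simp
    moreover have "g r \<le> Suc (g (r - (f+e)))" using gloc[of "f+e" r] fe 3 by auto
    ultimately show ?thesis using h by simp
  qed
qed

lemma Bbe: assumes "r < b + e" shows "H r \<le> H (r + (2*b - f) - (b+e))"
proof -
  note F = facts
  have X: "r + (2*b - f) - (b+e) = r + b - (f + e)" using F by arith
  show ?thesis
  proof (cases "r < b")
    case True
    have h: "H r = g r" using H_lo True by simp
    consider "r < f + e" | "f + e \<le> r \<and> r < f + 2*e" | "f + 2*e \<le> r" by arith
    then show ?thesis
    proof cases
      case 1
      then have "r < a" using fe a2 by auto
      then have "g r = r" using gid by simp
      moreover have "r + b - (f+e) < b" using 1 F by arith
      then have "H (r + (2*b - f) - (b+e)) = g (r + (2*b - f) - (b+e))" unfolding X by (rule H_lo)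
      ultimately show ?thesis using h K6[OF 1] by simp
    next
      case 2
      have "H (r + (2*b - f) - (b+e)) = Suc (r + b - (f + e) - b)" unfolding X using 2 F by (intro H_mid) arith+
      moreover have "r + b - (f + e) - b = r - (f+e)" by simp
      ultimately show ?thesis using h Gmid 2 by simp
    next
      case 3
      have "H (r + (2*b - f) - (b+e)) = Suc (g (r + b - (f+e) - (b+e)))" using H_hi X 3 by simp
      moreover have "r + b - (f+e) - (b+e) = r - (f + 2*e)" by simp
      moreover have "g r \<le> Suc (g (r - (f+2*e)))" using gloc[of "f+2*e" r] f2e 3 by auto
      ultimately show ?thesis using h by simp
    qed
  next
    case False
    have h: "H r = Suc (r - b)" using H_mid False assms by simp
    have t: "r - b < e" using assms False by arith
    have "b + e \<le> r + (2*b - f) - (b+e)" using X F False by arith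
    then have "H (r + (2*b - f) - (b+e)) = Suc (g (r + (2*b - f) - (b+e) - (b+e)))" using H_hi by simp
    moreover have "r + (2*b - f) - (b+e) - (b+e) = b + (r - b) + (2*b - f) - 2*(b+e)" using False by simp
    ultimately show ?thesis using h K7[OF t] by simp
  qed
qed

end

lemma loc_from_H:
  fixes c6 c w :: nat and Hs :: "nat \<Rightarrow> nat"
  assumes c: "0 < c" "c < c6"
  and A: "\<And>r. r < c6 \<Longrightarrow> c \<le> r \<Longrightarrow> Hs r \<le> Suc (Hs (r - c))"
  and B: "\<And>r. r < c \<Longrightarrow> Hs r \<le> Hs (r + c6 - c)"
  and w: "c \<le> w"
  shows "w div c6 + Hs (w mod c6) \<le> Suc ((w - c) div c6 + Hs ((w - c) mod c6))"
proof -
  define k where "k = w div c6"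
  define r where "r = w mod c6"
  have wk: "w = c6*k + r" unfolding k_def r_def by simp
  have r6: "r < c6" unfolding r_def using c by simp
  show ?thesis
  proof (cases "c \<le> r")
    case True
    have "w - c = c6*k + (r - c)" using wk True by simp
    moreover have "r - c < c6" using r6 by simp
    ultimately have "(w - c) div c6 = k" "(w - c) mod c6 = r - c" by simp_all
    then show ?thesis using A[OF r6 True] unfolding k_def r_def by simp
  next
    case False
    have "k \<noteq> 0" using False w wk by (cases k) auto
    then obtain k' where k': "k = Suc k'" by (cases k) auto
    have "w - c = c6*k' + (r + c6 - c)" using wk k' False c by simp
    moreover have "r + c6 - c < c6" using False c by linarith
    ultimately have "(w - c) div c6 = k'" "(w - c) mod c6 = r + c6 - c" by simp_all
    then show ?thesis using B[of r] False k' unfolding k_def[symmetric] r_def[symmetric] by simp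
  qed
qed

lemma loc_top:
  fixes c6 w :: nat and Hs :: "nat \<Rightarrow> nat"
  assumes "0 < c6" "c6 \<le> w"
  shows "w div c6 + Hs (w mod c6) \<le> Suc ((w - c6) div c6 + Hs ((w - c6) mod c6))"
proof -
  have "w div c6 = Suc ((w - c6) div c6)" using assms le_div_geq by simp
  moreover have "w mod c6 = (w - c6) mod c6" using assms le_mod_geq by simp
  ultimately show ?thesis by simp
qed

lemma grd_desc3: "grd_desc [c3, a, 1] x = gg a c3 x" by (simp add: gg_def)

context regs
begin

lemma Hs_eq:
  assumes gdef: "g = gg a c3" and "r < 2*b - f"
  shows "grd_desc [b + e, b, c3, a, 1] r = H r"
proof -
  note F = facts
  consider "b + e \<le> r" | "b \<le> r \<and> r < b + e" | "r < b" by linarith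
  then show ?thesis
  proof cases
    case 1
    have q: "r div (b+e) = 1" "r mod (b+e) = r - (b+e)"
      using 1 assms F le_div_geq[of "b+e" r] le_mod_geq[of "b+e" r] by auto
    have "r - (b+e) < b" using assms F by linarith
    then show ?thesis using 1 q H_hi[OF 1] by (simp add: gg_def gdef)
  next
    case 2
    have q: "r div b = 1" "r mod b = r - b"
      using 2 assms F le_div_geq[of b r] le_mod_geq[of b r] by auto
    have "r - b < a" using 2 F by linarith
    then show ?thesis using 2 q H_mid[of r] gid[of "r - b"] by (simp add: gg_def gdef)
  next
    case 3
    then show ?thesis using H_lo[OF 3] by (simp add: gg_def gdef)
  qed
qed

lemma grd_eq: "grd [1, a, c3, b, b+e, 2*b - f] w = w div (2*b - f) + grd_desc [b + e, b, c3, a, 1] (w mod (2*b - f))"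
  by (simp add: grd_def)

lemma canon: assumes gdef: "g = gg a c3" shows "canonical [1, a, c3, b, b+e, 2*b - f]"
proof (rule canonicalI)
  note F = facts
  let ?C = "[1, a, c3, b, b+e, 2*b - f]"
  let ?c6 = "2*b - f"
  let ?Hs = "grd_desc [b + e, b, c3, a, 1]"
  have c6p: "0 < ?c6" using F by linarith
  have HH: "\<And>r. r < ?c6 \<Longrightarrow> ?Hs r = H r" using Hs_eq[OF gdef] by simp
  have modl: "\<And>x. x mod ?c6 < ?c6" using c6p by simp
  fix w c assume cC: "c \<in> set ?C" and cw: "c \<le> w"
  have gen: "grd ?C w \<le> Suc (grd ?C (w - c))"
    if c0: "0 < c" "c < ?c6" and cw: "c \<le> w"
    and A': "\<And>r. r < ?c6 \<Longrightarrow> c \<le> r \<Longrightarrow> H r \<le> Suc (H (r - c))"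
    and B': "\<And>r. r < c \<Longrightarrow> H r \<le> H (r + ?c6 - c)" for c
  proof -
    have "w div ?c6 + ?Hs (w mod ?c6) \<le> Suc ((w - c) div ?c6 + ?Hs ((w - c) mod ?c6))"
    proof (rule loc_from_H[OF c0 _ _ cw])
      fix r assume "r < ?c6" "c \<le> r"
      then show "?Hs r \<le> Suc (?Hs (r - c))" using HH A' by simp
    next
      fix r assume r: "r < c"
      have "r + ?c6 - c < ?c6" using r c0 by linarith
      then show "?Hs r \<le> ?Hs (r + ?c6 - c)" using HH B'[OF r] r c0 by simp
    qed
    then show ?thesis unfolding grd_eq .
  qed
  have c6b: "b + e < ?c6" using F by linarith
  from cC consider "c = 1" | "c = a" | "c = c3" | "c = b" | "c = b + e" | "c = 2*b - f" by auto
  then show "grd ?C w \<le> Suc (grd ?C (w - c))"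
  proof cases
    case 1 show ?thesis unfolding 1 by (rule gen) (use A1 B1 F c6b cw 1 in auto)
  next
    case 2 show ?thesis unfolding 2 by (rule gen) (use Aa Ba F c6b cw 2 a2 in auto)
  next
    case 3 show ?thesis unfolding 3 by (rule gen) (use Ac3 Bc3 F c6b cw 3 ac3 in auto)
  next
    case 4 show ?thesis unfolding 4 by (rule gen) (use Ab Bb F c6b cw 4 in auto)
  next
    case 5 show ?thesis unfolding 5 by (rule gen) (use Abe Bbe F c6b cw 5 in auto)
  next
    case 6 then show ?thesis unfolding grd_eq using loc_top[OF c6p] cw by simp
  qed
qed simp_all

end

lemma gg_pos: assumes A: "2 \<le> a" "a < c3" "c3 \<le> 2*a" and "0 < x" shows "1 \<le> gg a c3 x"
proof -
  obtain q s where x: "x = c3*q + s" "s < c3" using gg_dec[of c3 x] A by auto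
  have gx: "gg a c3 x = q + (if s < a then s else Suc (s - a))" using gg_eval[OF A] x by simp
  show ?thesis using gx x assms by (cases q) auto
qed

lemma regs_bc:
  assumes a2: "2 \<le> a" and c3: "c3 = 2*a - 1 \<or> c3 = 2*a" and f: "f = 2*a - c3" and b: "3*a \<le> b + 1"
  and kc: "kctx a c3 b d m"
  shows "regs (gg a c3) a c3 b (c3 - a) f"
proof -
  interpret kctx a c3 b d m by (rule kc)
  have ac3: "a < c3" and c3a: "c3 \<le> 2*a" and c3a': "2*a \<le> c3 + 1" using c3 a2 by auto
  note G = a2 ac3 c3a
  show ?thesis
    apply unfold_locales
    subgoal using a2 .
    subgoal using ac3 .
    subgoal using c3a .
    subgoal using c3a' .
    subgoal using b c3 a2 by linarith
    subgoal by simp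
    subgoal using f c3 by auto
    subgoal using f c3 b a2 by auto
    subgoal by simp
    subgoal by (rule gg_id[OF G])
    subgoal by (rule gg_loc[OF G c3a'])
    subgoal by (rule gg_mid[OF G])
    subgoal by (rule gg_mono[OF G c3a'])
    subgoal using f c3 a2 by auto
    subgoal using f c3 a2 by auto
    subgoal for r using gg_mid[OF G, of r] f c3 a2 by auto
    subgoal for t by (rule K1)
    subgoal for t by (rule K2)
    subgoal for r
    proof -
      assume r: "r < a"
      have "b - f - c3 + r = b - 2*a + r" using f c3 a2 b by auto
      then show ?thesis using K3[OF r] by simp
    qed
    subgoal for r
    proof -
      assume r: "r < a" and big: "b + (c3 - a) \<le> r + (2*b - f) - c3"
      have eq: "r + (2*b - f) - c3 - (b + (c3 - a)) = b + r - (a + c3)" using f c3 a2 b by auto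
      have "a + c3 \<le> b + r" using big f c3 a2 b by auto
      then show ?thesis using K4[OF r] eq by simp
    qed
    subgoal for t
    proof -
      assume t: "t < c3 - a"
      have "a + t + (2*b - f) - c3 - (b + (c3 - a)) = b - c3 + t" using f c3 a2 b by auto
      then show ?thesis using K2[OF t] by simp
    qed
    subgoal for r
    proof -
      assume r: "r < f + (c3 - a)"
      then have r': "r < a" using f c3 by auto
      have "r + (2*b - f) - (b + (c3 - a)) = b - a + r" using f c3 a2 b by auto
      then show ?thesis using K1[OF r'] by simp
    qed
    subgoal for t
    proof -
      assume t: "t < c3 - a"
      have "b + t + (2*b - f) - 2*(b + (c3 - a)) = b - c3 + t" using f c3 a2 b by auto
      then show ?thesis using K2[OF t] by simp
    qed
    done
qed

lemma regs_a:
  assumes b: "4 < b"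
  shows "regs (gg 2 3) 2 3 b 1 0"
proof -
  have G: "2 \<le> (2::nat)" "(2::nat) < 3" "(3::nat) \<le> 2*2" by auto
  have c3a': "2*2 \<le> (3::nat) + 1" by simp
  show ?thesis
    apply unfold_locales
    subgoal by simp
    subgoal by simp
    subgoal by simp
    subgoal by simp
    subgoal using b by simp
    subgoal by simp
    subgoal by simp
    subgoal using b by simp
    subgoal by simp
    subgoal by (rule gg_id[OF G])
    subgoal by (rule gg_loc[OF G c3a'])
    subgoal by (rule gg_mid[OF G])
    subgoal for x using gg_mono[OF G c3a', of x] by simp
    subgoal by simp
    subgoal by simp
    subgoal for r using gg_id[OF G, of r] by auto
    subgoal for t
    proof -
      assume t: "t < 2"
      show ?thesis
      proof (cases "t = 0")
        case False
        then have "t = 1" using t by simp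
        then show ?thesis using gg_pos[OF G, of "b - 2 + t"] b by simp
      qed simp
    qed
    subgoal by simp
    subgoal by simp
    subgoal by simp
    subgoal by simp
    subgoal by simp
    subgoal by simp
    done
qed

lemma noncanon:
  fixes a c3 b c5 :: nat
  assumes A: "2 \<le> a" "a < c3" "c3 \<le> 2*a" and h: "b < c5" "c5 \<le> 2*b" "a < 2*b - c5" "2*b - c5 \<noteq> c3" "2*b - c5 < b"
  shows "\<not> canonical [1, a, c3, b, c5]"
proof -
  let ?C = "[1, a, c3, b, c5]"
  have "(\<Sum>i<5. ?C ! i * [0,0,0,2,0] ! i) = 2*b" by (simp add: numeral_eq_Suc lessThan_Suc)
  moreover have "(\<Sum>i<5. [0,0,0,2,0::nat] ! i) = 2" by (simp add: numeral_eq_Suc lessThan_Suc)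
  ultimately have ex: "\<exists>x::nat list. length x = length ?C \<and> (\<Sum>i<length ?C. ?C ! i * x ! i) = 2*b \<and> (\<Sum>i<length ?C. x ! i) = 2"
    by (intro exI[of _ "[0,0,0,2,0]"]) simp
  have o: "opt ?C (2*b) \<le> 2" unfolding opt_def by (rule Least_le) (rule ex)
  have d1: "2*b div c5 = 1" "2*b mod c5 = 2*b - c5"
    using h le_div_geq[of c5 "2*b"] le_mod_geq[of c5 "2*b"] by auto
  have d2: "(2*b - c5) div b = 0" "(2*b - c5) mod b = 2*b - c5" using h by auto
  have "grd ?C (2*b) = 1 + gg a c3 (2*b - c5)"
    using d1 d2 by (simp add: grd_def gg_def)
  moreover have "2 \<le> gg a c3 (2*b - c5)" using gg_ge2[OF A h(3) h(4)] .
  ultimately have "opt ?C (2*b) < grd ?C (2*b)" using o by simp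
  moreover have "0 < 2*b" using h by simp
  ultimately show ?thesis unfolding canonical_def counterexample_def by blast
qed

lemma get_kctx:
  fixes a c3 b c5 l G :: nat
  assumes a2: "2 \<le> a" and ac3: "a < c3" and c3a: "c3 \<le> 2*a" and c3a': "2*a \<le> c3 + 1"
  and c5: "c5 = b + c3 - a" and b2a: "2*a \<le> b"
  and l: "l = (c5 + c3 - 1) div c3" and Gl: "G \<le> l"
  and Geq: "int G = int (l*c3) - int c5 + 1 - ((int (l*c3) - int c5) div int a) * (int a - 1)"
  shows "\<exists>d m. kctx a c3 b d m"
proof -
  define n where "n = c5 + c3 - 1"
  have l1: "l*c3 \<le> n" unfolding l n_def[symmetric] by (rule div_times_less_eq_dividend)
  have "n = l*c3 + n mod c3" unfolding l n_def[symmetric] by simp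
  moreover have "n mod c3 < c3" using ac3 by simp
  ultimately have l2: "n < l*c3 + c3" by linarith
  have c5l: "c5 \<le> l*c3" using l2 n_def ac3 by linarith
  define d where "d = l*c3 - c5"
  have dc3: "d < c3" using l1 n_def d_def ac3 by linarith
  have ld: "l*c3 = c5 + d" using c5l d_def by simp
  have "l \<noteq> 0" using c5l c5 b2a ac3 a2 by (cases l) auto
  moreover have "l \<noteq> 1" using c5l c5 b2a ac3 a2 by auto
  ultimately obtain m where m: "l = m + 2" by (metis add_2_eq_Suc' not0_implies_Suc One_nat_def)
  have lm: "l*c3 = c3*m + 2*c3" using m by (simp add: algebra_simps)
  have hb: "b + d = c3*m + c3 + a" using lm ld c5 b2a ac3 by linarith
  have iD: "int (l*c3) - int c5 = int d" using ld by simp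
  have G2: "int G = int d + 1 - (int d div int a) * (int a - 1)" using Geq iD by simp
  have h1: "d \<le> Suc m" if "d < a"
  proof -
    have "int d div int a = 0" using that by simp
    then have "G = d + 1" using G2 by simp
    then show ?thesis using Gl m by simp
  qed
  have h2: "d \<le> m + a" if "a \<le> d"
  proof -
    have "d div a = Suc ((d - a) div a)" using that a2 le_div_geq[of a d] by simp
    moreover have "(d - a) div a = 0" using dc3 c3a by simp
    ultimately have "d div a = 1" by simp
    then have "int d div int a = 1" by (metis of_nat_1 zdiv_int)
    then have "int G = int d + 2 - int a" using G2 by simp
    then show ?thesis using Gl m by linarith
  qed
  have "kctx a c3 b d m"
    by unfold_locales (use a2 ac3 c3a c3a' dc3 hb h1 h2 b2a in auto)
  then show ?thesis by blast
qed

theorem theorem10: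
  fixes c2 c3 c4 c5 c6 :: nat
  defines "C \<equiv> [1, c2, c3, c4, c5, c6]"
  defines "l \<equiv> (c5 + c3 - 1) div c3"
  assumes sys: "is_system C"
  assumes cases:
    "(c2 = 2 \<and> c3 = 3 \<and> c5 = c4 + 1 \<and> c6 = 2 * c4 \<and> c4 > 4)
     \<or> (c3 = 2 * c2 - 1 \<and> c5 = c2 + c4 - 1 \<and> c6 = 2 * c4 - 1 \<and> c4 \<ge> 3 * c2 - 1
        \<and> grd C (l * c3) \<le> l
        \<and> int (grd C (l * c3)) = int (l * c3) - int c5 + 1
              - ((int (l * c3) - int c5) div int c2) * (int c2 - 1))
     \<or> (c3 = 2 * c2 \<and> c5 = c2 + c4 \<and> c6 = 2 * c4 \<and> c4 \<ge> 3 * c2 - 1 \<and> c4 \<noteq> 3 * c2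
        \<and> grd C (l * c3) \<le> l
        \<and> int (grd C (l * c3)) = int (l * c3) - int c5 + 1
              - ((int (l * c3) - int c5) div int c2) * (int c2 - 1))"
  shows "canonical C \<and> \<not> canonical (take 5 C)"
proof -
  have s: "1 < c2" "c2 < c3" "c3 < c4" "c4 < c5" "c5 < c6" using sys unfolding is_system_def C_def by auto
  have tk: "take 5 C = [1, c2, c3, c4, c5]" unfolding C_def by (simp add: numeral_eq_Suc)
  from cases consider
    (a) "c2 = 2" "c3 = 3" "c5 = c4 + 1" "c6 = 2 * c4" "c4 > 4"
  | (b) "c3 = 2 * c2 - 1" "c5 = c2 + c4 - 1" "c6 = 2 * c4 - 1" "c4 \<ge> 3 * c2 - 1"
        "grd C (l * c3) \<le> l"
        "int (grd C (l * c3)) = int (l * c3) - int c5 + 1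
              - ((int (l * c3) - int c5) div int c2) * (int c2 - 1)"
  | (c) "c3 = 2 * c2" "c5 = c2 + c4" "c6 = 2 * c4" "c4 \<ge> 3 * c2 - 1" "c4 \<noteq> 3 * c2"
        "grd C (l * c3) \<le> l"
        "int (grd C (l * c3)) = int (l * c3) - int c5 + 1
              - ((int (l * c3) - int c5) div int c2) * (int c2 - 1)"
    by blast
  then show ?thesis
  proof cases
    case a
    have "canonical [1, 2, 3, c4, c4 + 1, 2*c4 - 0]"
      by (rule regs.canon[OF regs_a]) (use a in simp_all)
    then have can: "canonical C" unfolding C_def using a by simp
    have "\<not> canonical [1, 2, 3, c4, c4 + 1]" by (rule noncanon) (use a in auto)
    then show ?thesis using can a tk by simp
  next
    case b
    have a2: "2 \<le> c2" using s by simp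
    have G: "2 \<le> c2" "c2 < c3" "c3 \<le> 2*c2" "2*c2 \<le> c3 + 1" using b a2 by auto
    have b2a: "2*c2 \<le> c4" using b a2 by linarith
    have c5e: "c5 = c4 + c3 - c2" using b a2 by auto
    obtain d m where kc: "kctx c2 c3 c4 d m"
      using get_kctx[OF G c5e b2a l_def[THEN meta_eq_to_obj_eq] b(5) b(6)] by blast
    have "canonical [1, c2, c3, c4, c4 + (c3 - c2), 2*c4 - 1]"
      by (rule regs.canon[OF regs_bc[OF a2 _ _ _ kc]]) (use b a2 in auto)
    moreover have "[1, c2, c3, c4, c4 + (c3 - c2), 2*c4 - 1] = C" unfolding C_def using b a2 by auto
    ultimately have can: "canonical C" by simp
    have "\<not> canonical [1, c2, c3, c4, c5]" by (rule noncanon[OF G(1-3)]) (use b a2 in auto)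
    then show ?thesis using can tk by simp
  next
    case c
    have a2: "2 \<le> c2" using s by simp
    have G: "2 \<le> c2" "c2 < c3" "c3 \<le> 2*c2" "2*c2 \<le> c3 + 1" using c a2 by auto
    have b2a: "2*c2 \<le> c4" using c a2 by linarith
    have c5e: "c5 = c4 + c3 - c2" using c a2 by auto
    obtain d m where kc: "kctx c2 c3 c4 d m"
      using get_kctx[OF G c5e b2a l_def[THEN meta_eq_to_obj_eq] c(6) c(7)] by blast
    have "canonical [1, c2, c3, c4, c4 + (c3 - c2), 2*c4 - 0]"
      by (rule regs.canon[OF regs_bc[OF a2 _ _ _ kc]]) (use c a2 in auto)
    moreover have "[1, c2, c3, c4, c4 + (c3 - c2), 2*c4 - 0] = C" unfolding C_def using c a2 by auto
    ultimately have can: "canonical C" by simp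
    have "\<not> canonical [1, c2, c3, c4, c5]" by (rule noncanon[OF G(1-3)]) (use c a2 in auto)
    then show ?thesis using can tk by simp
  qed
qed

end
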